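(* There exists a $(0)$-solvable knot $K$ (equivalently, a knot with Arf invariant $0$) with $\eta^{(2)}(M_K,\epsilon)=0$, i.e. zero abelian $L^2$-eta invariant, which is not algebraically torsion (no positive multiple $mK$ is algebraically slice).
   Context: $M_K$ is zero-framed surgery on $K$, $\epsilon\colon\pi_1(M_K)\to\mathbb{Z}$ the abelianization. For a closed 3-manifold $M$ and a homomorphism $\varphi\colon\pi_1(M)\to G$, $\eta^{(2)}(M,\varphi)\in\mathbb{R}$ is the Cheeger–Gromov (reduced) $L^2$-eta invariant; for knots one has $\eta^{(2)}(M_K,\epsilon)=\int_{S^1}\sigma_z(K)\,dz$ (normalized measure), where $\sigma_z(K)=\mathrm{sign}(A(1-z)+A^t(1-\bar z))$ for a Seifert matrix $A$. A knot is $(0)$-solvable if $M_K$ bounds a compact spin 4-manifold $W$ with $H_1(M_K)\to H_1(W)$ an isomorphism and $H_2(W)$ admitting two dual Lagrangians for the intersection form (submodules on which intersection and self-intersection forms vanish, paired nonsingularly with each other, whose images freely generate $H_2(W)$); this is equivalent to $\mathrm{Arf}(K)=0$, i.e. $\Delta_K(-1)\equiv\pm1\bmod 8$. Algebraically slice: having a Seifert matrix $\begin{pmatrix}0&B\\C&D\end{pmatrix}$ with equal-size square blocks; $mK$ is the $m$-fold connected sum. *)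

theory Defs
  imports "HOL-Analysis.Analysis" "Jordan_Normal_Form.Char_Poly"
begin

text \<open>Knots are represented through their Seifert matrices: integral square
matrices A with A - A^T unimodular (every such matrix is the Seifert matrix of
some knot, and two matrices come from the same knot-class data iff S-equivalent).\<close>

definition seifert_matrix :: "int mat \<Rightarrow> bool" where
  "seifert_matrix A \<longleftrightarrow> (\<exists>n. A \<in> carrier_mat n n \<and> \<bar>Determinant.det (A - transpose_mat A)\<bar> = 1)"

definition int_congruent :: "int mat \<Rightarrow> int mat \<Rightarrow> bool" where
  "int_congruent A B \<longleftrightarrow> (\<exists>n P. A \<in> carrier_mat n n \<and> P \<in> carrier_mat n n \<and>
      \<bar>Determinant.det P\<bar> = 1 \<and> B = P * A * transpose_mat P)"

text \<open>Elementary enlargements (Lickorish, Def. 8.3):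
  [[A, xi, 0],[0,0,0],[0,1,0]]  and  [[A,0,0],[xi^T,0,1],[0,0,0]].\<close>
definition enlarge1 :: "int mat \<Rightarrow> (nat \<Rightarrow> int) \<Rightarrow> int mat" where
  "enlarge1 A xi = (let n = dim_row A in mat (n+2) (n+2) (\<lambda>(i,j).
      if i < n \<and> j < n then A $$ (i,j)
      else if i < n \<and> j = n then xi i
      else if i = n+1 \<and> j = n then 1 else 0))"

definition enlarge2 :: "int mat \<Rightarrow> (nat \<Rightarrow> int) \<Rightarrow> int mat" where
  "enlarge2 A xi = (let n = dim_row A in mat (n+2) (n+2) (\<lambda>(i,j).
      if i < n \<and> j < n then A $$ (i,j)
      else if i = n \<and> j < n then xi j
      else if i = n \<and> j = n+1 then 1 else 0))"

inductive S_equiv :: "int mat \<Rightarrow> int mat \<Rightarrow> bool" where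
  refl: "S_equiv A A"
| congr: "int_congruent A B \<Longrightarrow> S_equiv A B"
| enl1: "A \<in> carrier_mat n n \<Longrightarrow> S_equiv A (enlarge1 A xi)"
| enl2: "A \<in> carrier_mat n n \<Longrightarrow> S_equiv A (enlarge2 A xi)"
| sym: "S_equiv A B \<Longrightarrow> S_equiv B A"
| trans: "S_equiv A B \<Longrightarrow> S_equiv B C \<Longrightarrow> S_equiv A C"

text \<open>Block sum (Seifert matrix of a connected sum) and m-fold sum.\<close>
definition block_sum :: "int mat \<Rightarrow> int mat \<Rightarrow> int mat" where
  "block_sum A B = four_block_mat A (0\<^sub>m (dim_row A) (dim_col B)) (0\<^sub>m (dim_row B) (dim_col A)) B"

fun mfold_sum :: "nat \<Rightarrow> int mat \<Rightarrow> int mat" where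
  "mfold_sum 0 A = 0\<^sub>m 0 0"
| "mfold_sum (Suc m) A = block_sum A (mfold_sum m A)"

definition metabolic_form :: "int mat \<Rightarrow> bool" where
  "metabolic_form M \<longleftrightarrow> (\<exists>g B C D. B \<in> carrier_mat g g \<and> C \<in> carrier_mat g g \<and>
      D \<in> carrier_mat g g \<and> M = four_block_mat (0\<^sub>m g g) B C D)"

text \<open>A knot with Seifert matrix A is algebraically slice iff it has a Seifert matrix
(i.e. a matrix S-equivalent to A) of metabolic shape.\<close>
definition alg_slice :: "int mat \<Rightarrow> bool" where
  "alg_slice A \<longleftrightarrow> (\<exists>M. S_equiv A M \<and> metabolic_form M)"

definition alg_torsion :: "int mat \<Rightarrow> bool" where
  "alg_torsion A \<longleftrightarrow> (\<exists>m>0. alg_slice (mfold_sum m A))"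

definition herm_signature :: "complex mat \<Rightarrow> int" where
  "herm_signature H =
     int (\<Sum>x\<in>{x. poly (char_poly H) x = 0 \<and> Im x = 0 \<and> Re x > 0}. order x (char_poly H))
   - int (\<Sum>x\<in>{x. poly (char_poly H) x = 0 \<and> Im x = 0 \<and> Re x < 0}. order x (char_poly H))"

definition lt_signature :: "int mat \<Rightarrow> complex \<Rightarrow> int" where
  "lt_signature A z = herm_signature
     ((1 - z) \<cdot>\<^sub>m map_mat of_int A + (1 - cnj z) \<cdot>\<^sub>m map_mat of_int (transpose_mat A))"

text \<open>Abelian L2-eta invariant eta^(2)(M_K, epsilon) = integral of sigma_z over S^1
with normalized measure.\<close>
definition abelian_eta :: "int mat \<Rightarrow> real" where
  "abelian_eta A = (1 / (2 * pi)) * integral {0..2*pi} (\<lambda>t. real_of_int (lt_signature A (cis t)))"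

text \<open>Arf invariant zero (equivalently (0)-solvable): Delta_K(-1) = det(A + A^T) = +-1 mod 8.\<close>
definition arf_zero :: "int mat \<Rightarrow> bool" where
  "arf_zero A \<longleftrightarrow> Determinant.det (A + transpose_mat A) mod 8 \<in> {1, 7}"

end

theory Submission
  imports Defs
begin


definition bf :: "int mat \<Rightarrow> nat \<Rightarrow> (nat \<Rightarrow> real) \<Rightarrow> (nat \<Rightarrow> real) \<Rightarrow> real" where
  "bf A n x y = (\<Sum>i<n. \<Sum>j<n. of_int (A $$ (i,j)) * x i * y j)"

definition lc :: "(nat \<Rightarrow> nat \<Rightarrow> real) \<Rightarrow> nat set \<Rightarrow> (nat \<Rightarrow> real) \<Rightarrow> nat \<Rightarrow> real" where
  "lc v J c = (\<lambda>i. \<Sum>j\<in>J. c j * v j i)"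

definition posdim :: "int mat \<Rightarrow> nat \<Rightarrow> nat \<Rightarrow> bool" where
  "posdim A n k \<longleftrightarrow> (\<exists>v J. finite J \<and> card J = k \<and>
      (\<forall>c. (\<exists>j\<in>J. c j \<noteq> 0) \<longrightarrow> bf A n (lc v J c) (lc v J c) > 0))"

definition good :: "int mat \<Rightarrow> bool" where
  "good A \<longleftrightarrow> (\<exists>k. dim_row A < 2 * k \<and> posdim A (dim_row A) k)"

lemma bf_cong: "(\<And>i. i < n \<Longrightarrow> x i = x' i) \<Longrightarrow> (\<And>i. i < n \<Longrightarrow> y i = y' i) \<Longrightarrow> bf A n x y = bf A n x' y'"
  unfolding bf_def by (intro sum.cong refl) auto

lemma kernel:
  fixes M :: "nat \<Rightarrow> nat \<Rightarrow> real"
  assumes "finite I" "finite J" "card I < card J"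
  shows "\<exists>c. (\<exists>j\<in>J. c j \<noteq> 0) \<and> (\<forall>i\<in>I. (\<Sum>j\<in>J. M i j * c j) = 0)"
  using assms
proof (induction I arbitrary: J M rule: finite_induct)
  case empty
  then have "J \<noteq> {}" by auto
  then show ?case by (intro exI[of _ "\<lambda>_. 1"]) auto
next
  case (insert i0 I)
  show ?case
  proof (cases "\<forall>j\<in>J. M i0 j = 0")
    case True
    from insert.IH[of J M] insert.prems insert.hyps obtain c where
      c: "\<exists>j\<in>J. c j \<noteq> 0" "\<forall>i\<in>I. (\<Sum>j\<in>J. M i j * c j) = 0" by auto
    show ?thesis using c True by (intro exI[of _ c]) auto
  next
    case False
    then obtain j0 where j0: "j0 \<in> J" "M i0 j0 \<noteq> 0" by auto
    define J' where "J' = J - {j0}"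
    define M' where "M' = (\<lambda>i j. M i j - M i j0 * M i0 j / M i0 j0)"
    have cJ': "card J' = card J - 1" "finite J'" using j0 insert.prems unfolding J'_def by auto
    have "card I < card J'" using cJ' insert.prems insert.hyps by auto
    from insert.IH[OF cJ'(2) this] obtain c' where
      c': "\<exists>j\<in>J'. c' j \<noteq> 0" "\<forall>i\<in>I. (\<Sum>j\<in>J'. M' i j * c' j) = 0" by blast
    define c where "c = c'(j0 := - (\<Sum>j\<in>J'. M i0 j * c' j) / M i0 j0)"
    have sJ: "(\<Sum>j\<in>J. f j) = f j0 + (\<Sum>j\<in>J'. f j)" for f :: "nat \<Rightarrow> real"
      unfolding J'_def using j0 insert.prems by (simp add: sum.remove)
    have cJ: "(\<Sum>j\<in>J'. f j * c j) = (\<Sum>j\<in>J'. f j * c' j)" for f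
      unfolding c_def J'_def by (intro sum.cong) auto
    have cj0: "c j0 = - (\<Sum>j\<in>J'. M i0 j * c' j) / M i0 j0" by (simp add: c_def)
    have "\<exists>j\<in>J. c j \<noteq> 0" using c' unfolding c_def J'_def by auto
    moreover have "(\<Sum>j\<in>J. M i j * c j) = 0" if "i \<in> insert i0 I" for i
    proof (cases "i = i0")
      case True
      then show ?thesis using j0 by (simp add: sJ cJ cj0)
    next
      case False
      then have iI: "i \<in> I" using that by auto
      have "(\<Sum>j\<in>J'. M' i j * c' j) = (\<Sum>j\<in>J'. M i j * c' j) - M i j0 / M i0 j0 * (\<Sum>j\<in>J'. M i0 j * c' j)"
        unfolding M'_def by (simp add: sum_subtractf sum_distrib_left algebra_simps)
      then have "(\<Sum>j\<in>J'. M i j * c' j) = M i j0 / M i0 j0 * (\<Sum>j\<in>J'. M i0 j * c' j)"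
        using c'(2) iI by auto
      then show ?thesis using j0 by (simp add: sJ cJ cj0)
    qed
    ultimately show ?thesis by blast
  qed
qed

lemma metabolic_not_good:
  assumes "metabolic_form M" shows "\<not> good M"
proof
  assume "good M"
  from assms obtain g B C D where BCD: "B \<in> carrier_mat g g" "C \<in> carrier_mat g g"
      "D \<in> carrier_mat g g" and M: "M = four_block_mat (0\<^sub>m g g) B C D"
    unfolding metabolic_form_def by blast
  have dM: "dim_row M = 2 * g" using M BCD by simp
  from \<open>good M\<close> obtain k where k: "2 * g < 2 * k" "posdim M (2*g) k" unfolding good_def dM by auto
  then obtain v J where vJ: "finite J" "card J = k"
    "\<And>c. (\<exists>j\<in>J. c j \<noteq> 0) \<Longrightarrow> bf M (2*g) (lc v J c) (lc v J c) > 0"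
    unfolding posdim_def by blast
  have "card {g..<2*g} < card J" using k vJ by auto
  from kernel[OF _ vJ(1) this, of "\<lambda>i j. v j i"] obtain c where
    c: "\<exists>j\<in>J. c j \<noteq> 0" "\<forall>i\<in>{g..<2*g}. (\<Sum>j\<in>J. v j i * c j) = 0" by auto
  have x0: "lc v J c i = 0" if "g \<le> i" "i < 2*g" for i
    using c(2) that unfolding lc_def by (auto simp: mult.commute)
  have M0: "M $$ (i,j) = 0" if "i < g" "j < g" for i j
    using that M BCD by simp
  have "bf M (2*g) (lc v J c) (lc v J c) = 0"
    unfolding bf_def
  proof (intro sum.neutral ballI)
    fix i j assume ij: "i \<in> {..<2*g}" "j \<in> {..<2*g}"
    show "real_of_int (M $$ (i, j)) * lc v J c i * lc v J c j = 0"
      using ij x0[of i] x0[of j] M0[of i j] by (cases "i < g"; cases "j < g") auto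
  qed
  with vJ(3)[OF c(1)] show False by simp
qed




definition mv :: "int mat \<Rightarrow> nat \<Rightarrow> (nat \<Rightarrow> real) \<Rightarrow> nat \<Rightarrow> real" where
  "mv M n y = (\<lambda>i. \<Sum>j<n. of_int (M $$ (i,j)) * y j)"

lemma bf_mv: "bf A n x y = (\<Sum>i<n. x i * mv A n y i)"
  unfolding bf_def mv_def by (simp add: sum_distrib_left algebra_simps)

lemma entry_mult: assumes "X \<in> carrier_mat n n" "Y \<in> carrier_mat n n" "i < n" "j < n"
  shows "(X * Y) $$ (i,j) = (\<Sum>k<n. X $$ (i,k) * Y $$ (k,j))"
  using assms by (simp add: index_mult_mat scalar_prod_def atLeast0LessThan)

lemma mv_mult: assumes "X \<in> carrier_mat n n" "Y \<in> carrier_mat n n" "i < n"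
  shows "mv (X * Y) n y i = mv X n (mv Y n y) i"
proof -
  have "mv (X * Y) n y i = (\<Sum>j<n. (\<Sum>k<n. of_int (X $$ (i,k)) * of_int (Y $$ (k,j))) * y j)"
    unfolding mv_def
  proof (rule sum.cong[OF HOL.refl])
    fix j assume "j \<in> {..<n}" then have j: "j < n" by simp
    show "real_of_int ((X * Y) $$ (i, j)) * y j = (\<Sum>k<n. real_of_int (X $$ (i, k)) * real_of_int (Y $$ (k, j))) * y j"
      by (simp only: entry_mult[OF assms j] of_int_sum of_int_mult)
  qed
  also have "\<dots> = (\<Sum>j<n. \<Sum>k<n. of_int (X $$ (i,k)) * of_int (Y $$ (k,j)) * y j)"
    by (simp only: sum_distrib_right)
  also have "\<dots> = (\<Sum>k<n. \<Sum>j<n. of_int (X $$ (i,k)) * of_int (Y $$ (k,j)) * y j)"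
    by (rule sum.swap)
  also have "\<dots> = mv X n (mv Y n y) i"
    unfolding mv_def by (simp add: sum_distrib_left mult.assoc)
  finally show ?thesis .
qed

lemma dot_mv: "(\<Sum>i<n. x i * mv X n w i) = (\<Sum>j<n. mv (transpose_mat X) n x j * w j)"
  if "X \<in> carrier_mat n n"
proof -
  have "(\<Sum>i<n. x i * mv X n w i) = (\<Sum>i<n. \<Sum>j<n. x i * of_int (X $$ (i,j)) * w j)"
    unfolding mv_def by (simp add: sum_distrib_left algebra_simps)
  also have "\<dots> = (\<Sum>j<n. \<Sum>i<n. x i * of_int (X $$ (i,j)) * w j)"
    by (rule sum.swap)
  also have "\<dots> = (\<Sum>j<n. mv (transpose_mat X) n x j * w j)"
    unfolding mv_def using that by (simp add: sum_distrib_right sum_distrib_left mult.commute mult.left_commute)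
  finally show ?thesis .
qed

lemma bf_congr: assumes A: "A \<in> carrier_mat n n" and P: "P \<in> carrier_mat n n"
  shows "bf (P * A * transpose_mat P) n x y = bf A n (mv (transpose_mat P) n x) (mv (transpose_mat P) n y)"
proof -
  have PT: "transpose_mat P \<in> carrier_mat n n" using P by simp
  have PA: "P * A \<in> carrier_mat n n" using P A by simp
  have "bf (P * A * transpose_mat P) n x y = (\<Sum>i<n. x i * mv P n (mv A n (mv (transpose_mat P) n y)) i)"
    unfolding bf_mv
  proof (rule sum.cong[OF HOL.refl])
    fix i assume "i \<in> {..<n}"
    then have i: "i < n" by simp
    show "x i * mv (P * A * transpose_mat P) n y i = x i * mv P n (mv A n (mv (transpose_mat P) n y)) i"
      using mv_mult[OF PA PT i] mv_mult[OF P A i] by simp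
  qed
  also have "\<dots> = (\<Sum>j<n. mv (transpose_mat P) n x j * mv A n (mv (transpose_mat P) n y) j)"
    by (rule dot_mv[OF P])
  also have "\<dots> = bf A n (mv (transpose_mat P) n x) (mv (transpose_mat P) n y)"
    unfolding bf_mv ..
  finally show ?thesis .
qed

lemma lc_mv: "finite J \<Longrightarrow> lc (\<lambda>j. mv M n (v j)) J c = mv M n (lc v J c)"
proof (rule ext)
  fix i
  have "lc (\<lambda>j. mv M n (v j)) J c i = (\<Sum>j\<in>J. \<Sum>k<n. c j * (of_int (M $$ (i,k)) * v j k))"
    unfolding lc_def mv_def by (simp add: sum_distrib_left)
  also have "\<dots> = (\<Sum>k<n. \<Sum>j\<in>J. c j * (of_int (M $$ (i,k)) * v j k))"
    by (rule sum.swap)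
  also have "\<dots> = mv M n (lc v J c) i"
    unfolding lc_def mv_def by (simp add: sum_distrib_left algebra_simps)
  finally show "lc (\<lambda>j. mv M n (v j)) J c i = mv M n (lc v J c) i" .
qed

lemma posdim_congr: assumes A: "A \<in> carrier_mat n n" and P: "P \<in> carrier_mat n n"
  and pd: "posdim (P * A * transpose_mat P) n k"
  shows "posdim A n k"
proof -
  from pd obtain v J where vJ: "finite J" "card J = k"
    "\<And>c. (\<exists>j\<in>J. c j \<noteq> 0) \<Longrightarrow> bf (P * A * transpose_mat P) n (lc v J c) (lc v J c) > 0"
    unfolding posdim_def by blast
  show ?thesis unfolding posdim_def
  proof (intro exI[of _ "\<lambda>j. mv (transpose_mat P) n (v j)"] exI[of _ J] conjI allI impI)
    fix c :: "nat \<Rightarrow> real" assume "\<exists>j\<in>J. c j \<noteq> 0"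
    from vJ(3)[OF this] show "bf A n (lc (\<lambda>j. mv (transpose_mat P) n (v j)) J c) (lc (\<lambda>j. mv (transpose_mat P) n (v j)) J c) > 0"
      unfolding lc_mv[OF vJ(1)] bf_congr[OF A P] .
  qed (use vJ in auto)
qed



lemma congruent_sym: assumes "int_congruent A B" shows "int_congruent B A"
proof -
  from assms obtain n P where A: "A \<in> carrier_mat n n" and P: "P \<in> carrier_mat n n"
    and dP: "\<bar>det P\<bar> = 1" and B: "B = P * A * transpose_mat P"
    unfolding int_congruent_def by blast
  define Q where "Q = det P \<cdot>\<^sub>m adj_mat P"
  have adj: "adj_mat P \<in> carrier_mat n n" using adj_mat(1)[OF P] .
  have Q: "Q \<in> carrier_mat n n" unfolding Q_def using adj by simp
  have "det P = 1 \<or> det P = -1" using dP by linarith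
  then have d2: "det P * det P = 1" by auto
  have "Q * P = det P \<cdot>\<^sub>m (adj_mat P * P)"
    unfolding Q_def by (rule mult_smult_assoc_mat[OF adj P])
  also have "\<dots> = det P \<cdot>\<^sub>m (det P \<cdot>\<^sub>m 1\<^sub>m n)" using adj_mat(3)[OF P] by simp
  also have "\<dots> = 1\<^sub>m n"
    by (rule eq_matI) (auto simp: mult.assoc[symmetric] d2)
  finally have QP: "Q * P = 1\<^sub>m n" .
  have PQ: "transpose_mat P * transpose_mat Q = 1\<^sub>m n"
    using transpose_mult[OF Q P] QP by simp
  have PT: "transpose_mat P \<in> carrier_mat n n" and QT: "transpose_mat Q \<in> carrier_mat n n"
    using P Q by auto
  have PA: "P * A \<in> carrier_mat n n" using P A by simp
  have "Q * B = Q * (P * A * transpose_mat P)" unfolding B ..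
  also have "\<dots> = (Q * (P * A)) * transpose_mat P"
    using assoc_mult_mat[OF Q PA PT] by simp
  also have "Q * (P * A) = (Q * P) * A"
    using assoc_mult_mat[OF Q P A] by simp
  also have "\<dots> = A" using QP A by simp
  finally have QB: "Q * B = A * transpose_mat P" .
  have "Q * B * transpose_mat Q = A * transpose_mat P * transpose_mat Q" unfolding QB ..
  also have "\<dots> = A * (transpose_mat P * transpose_mat Q)"
    using assoc_mult_mat[OF A PT QT] .
  also have "\<dots> = A" using PQ A by simp
  finally have eq: "A = Q * B * transpose_mat Q" by simp
  have "det Q * det P = 1" using det_mult[OF Q P] QP by simp
  then have "\<bar>det Q\<bar> * \<bar>det P\<bar> = 1" by (simp add: abs_mult[symmetric])
  then have "\<bar>det Q\<bar> = 1" using dP by simp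
  moreover have "B \<in> carrier_mat n n" using B A P by simp
  ultimately show ?thesis unfolding int_congruent_def using Q eq by blast
qed



lemma sum_split: "(\<Sum>i<m+(n::nat). f i) = (\<Sum>i<m. f i) + (\<Sum>i<n. f (m+i))"
  by (induction n) (auto simp: add.commute add.left_commute)

lemma bf_block: assumes A1: "A1 \<in> carrier_mat n1 n1" and A2: "A2 \<in> carrier_mat n2 n2"
  shows "bf (block_sum A1 A2) (n1+n2) x y = bf A1 n1 x y + bf A2 n2 (\<lambda>i. x (n1+i)) (\<lambda>i. y (n1+i))"
proof -
  let ?B = "block_sum A1 A2"
  have e11: "?B $$ (i,j) = A1 $$ (i,j)" if "i < n1" "j < n1" for i j
    using that A1 A2 unfolding block_sum_def by simp
  have e12: "?B $$ (i,n1+j) = 0" if "i < n1" "j < n2" for i j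
    using that A1 A2 unfolding block_sum_def by simp
  have e21: "?B $$ (n1+i,j) = 0" if "i < n2" "j < n1" for i j
    using that A1 A2 unfolding block_sum_def by simp
  have e22: "?B $$ (n1+i,n1+j) = A2 $$ (i,j)" if "i < n2" "j < n2" for i j
    using that A1 A2 unfolding block_sum_def by simp
  show ?thesis
    unfolding bf_def sum_split
    by (simp add: e11 e12 e21 e22 sum.distrib)
qed

lemma bf_zero_left: "bf A n (\<lambda>i. 0) y = 0"
  unfolding bf_def by simp

lemma lc_zero: "(\<forall>j\<in>J. c j = 0) \<Longrightarrow> lc v J c = (\<lambda>i. 0)"
  unfolding lc_def by (rule ext) simp

lemma posdim_nonneg: assumes "\<And>c. (\<exists>j\<in>J. c j \<noteq> 0) \<Longrightarrow> bf A n (lc v J c) (lc v J c) > 0"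
  shows "bf A n (lc v J c) (lc v J c) \<ge> 0"
proof (cases "\<exists>j\<in>J. c j \<noteq> 0")
  case True then show ?thesis using assms[OF True] by simp
next
  case False then show ?thesis using lc_zero[of J c v] bf_zero_left by simp
qed

lemma posdim_block: assumes A1: "A1 \<in> carrier_mat n1 n1" and A2: "A2 \<in> carrier_mat n2 n2"
  and p1: "posdim A1 n1 k1" and p2: "posdim A2 n2 k2"
  shows "posdim (block_sum A1 A2) (n1+n2) (k1+k2)"
proof -
  from p1 obtain v1 J1 where v1: "finite J1" "card J1 = k1"
    "\<And>c. (\<exists>j\<in>J1. c j \<noteq> 0) \<Longrightarrow> bf A1 n1 (lc v1 J1 c) (lc v1 J1 c) > 0"
    unfolding posdim_def by blast
  from p2 obtain v2 J2 where v2: "finite J2" "card J2 = k2"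
    "\<And>c. (\<exists>j\<in>J2. c j \<noteq> 0) \<Longrightarrow> bf A2 n2 (lc v2 J2 c) (lc v2 J2 c) > 0"
    unfolding posdim_def by blast
  define e :: "nat \<Rightarrow> nat" where "e = (\<lambda>j. 2 * j)"
  define o' :: "nat \<Rightarrow> nat" where "o' = (\<lambda>j. 2 * j + 1)"
  define J where "J = e ` J1 \<union> o' ` J2"
  define v where "v = (\<lambda>j i. if even j then (if i < n1 then v1 (j div 2) i else 0)
                              else (if n1 \<le> i then v2 (j div 2) (i - n1) else 0))"
  have inje: "inj e" and injo: "inj o'" unfolding e_def o'_def inj_def by auto
  have disj: "e ` J1 \<inter> o' ` J2 = {}" unfolding e_def o'_def by auto presburger
  have fin: "finite J" unfolding J_def using v1 v2 by auto
  have card: "card J = k1 + k2" unfolding J_def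
    using v1 v2 disj card_Un_disjoint card_image inje injo
    by (metis finite_imageI inj_on_subset subset_UNIV)
  have sJ: "(\<Sum>j\<in>J. f j) = (\<Sum>j\<in>J1. f (e j)) + (\<Sum>j\<in>J2. f (o' j))" for f :: "nat \<Rightarrow> real"
    unfolding J_def using v1 v2 disj
    by (simp add: sum.union_disjoint sum.reindex inj_on_subset[OF inje] inj_on_subset[OF injo])
  have lc1: "lc v J c i = lc v1 J1 (\<lambda>j. c (e j)) i" if "i < n1" for c i
    using that unfolding lc_def sJ v_def e_def o'_def by simp
  have lc2: "lc v J c (n1 + i) = lc v2 J2 (\<lambda>j. c (o' j)) i" for c i
    unfolding lc_def sJ v_def e_def o'_def by simp
  show ?thesis unfolding posdim_def
  proof (intro exI[of _ v] exI[of _ J] conjI allI impI)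
    fix c :: "nat \<Rightarrow> real" assume c: "\<exists>j\<in>J. c j \<noteq> 0"
    have eq: "bf (block_sum A1 A2) (n1+n2) (lc v J c) (lc v J c)
       = bf A1 n1 (lc v1 J1 (\<lambda>j. c (e j))) (lc v1 J1 (\<lambda>j. c (e j)))
       + bf A2 n2 (lc v2 J2 (\<lambda>j. c (o' j))) (lc v2 J2 (\<lambda>j. c (o' j)))"
      unfolding bf_block[OF A1 A2]
      by (intro arg_cong2[where f="(+)"] bf_cong) (auto simp: lc1 lc2)
    have g1: "bf A1 n1 (lc v1 J1 (\<lambda>j. c (e j))) (lc v1 J1 (\<lambda>j. c (e j))) \<ge> 0"
      by (rule posdim_nonneg) (rule v1(3))
    have g2: "bf A2 n2 (lc v2 J2 (\<lambda>j. c (o' j))) (lc v2 J2 (\<lambda>j. c (o' j))) \<ge> 0"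
      by (rule posdim_nonneg) (rule v2(3))
    from c obtain j where j: "j \<in> J" "c j \<noteq> 0" by auto
    show "bf (block_sum A1 A2) (n1+n2) (lc v J c) (lc v J c) > 0"
    proof (cases "j \<in> e ` J1")
      case True
      then obtain j' where "j' \<in> J1" "j = e j'" by auto
      then have "bf A1 n1 (lc v1 J1 (\<lambda>j. c (e j))) (lc v1 J1 (\<lambda>j. c (e j))) > 0"
        using j by (intro v1(3)) auto
      then show ?thesis using eq g2 by simp
    next
      case False
      then obtain j' where "j' \<in> J2" "j = o' j'" using j unfolding J_def by auto
      then have "bf A2 n2 (lc v2 J2 (\<lambda>j. c (o' j))) (lc v2 J2 (\<lambda>j. c (o' j))) > 0"
        using j by (intro v2(3)) auto
      then show ?thesis using eq g1 by simp
    qed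
  qed (use fin card in auto)
qed



lemma bf_lc_left: assumes "finite J"
  shows "bf A n (lc v J c) y = (\<Sum>j\<in>J. c j * bf A n (v j) y)"
proof -
  have "bf A n (lc v J c) y = (\<Sum>i<n. \<Sum>j\<in>J. c j * (v j i * mv A n y i))"
    unfolding bf_mv lc_def by (simp add: sum_distrib_right mult.assoc)
  also have "\<dots> = (\<Sum>j\<in>J. \<Sum>i<n. c j * (v j i * mv A n y i))" by (rule sum.swap)
  also have "\<dots> = (\<Sum>j\<in>J. c j * bf A n (v j) y)"
    unfolding bf_mv by (simp add: sum_distrib_left)
  finally show ?thesis .
qed

lemma bf_lc_right: assumes "finite J"
  shows "bf A n x (lc v J c) = (\<Sum>j\<in>J. c j * bf A n x (v j))"
proof -
  have "bf A n x (lc v J c) = (\<Sum>i<n. x i * lc (\<lambda>j. mv A n (v j)) J c i)"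
    unfolding bf_mv lc_mv[OF assms] ..
  also have "\<dots> = (\<Sum>i<n. x i * (\<Sum>j\<in>J. c j * mv A n (v j) i))"
    unfolding lc_def ..
  also have "\<dots> = (\<Sum>i<n. \<Sum>j\<in>J. c j * (x i * mv A n (v j) i))"
    by (simp add: sum_distrib_left mult.left_commute)
  also have "\<dots> = (\<Sum>j\<in>J. \<Sum>i<n. c j * (x i * mv A n (v j) i))" by (rule sum.swap)
  also have "\<dots> = (\<Sum>j\<in>J. c j * bf A n x (v j))"
    unfolding bf_mv by (simp add: sum_distrib_left)
  finally show ?thesis .
qed

lemma bf_expand: "bf A n (\<lambda>i. x i + s * y i) (\<lambda>i. x i + s * y i)
   = bf A n x x + s * (bf A n x y + bf A n y x) + s^2 * bf A n y y"
  unfolding bf_def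
  by (simp add: algebra_simps sum.distrib sum_distrib_left power2_eq_square)

lemma sum2: "(\<Sum>i<n+2. f i) = (\<Sum>i<n. f i) + f n + f (Suc n)"
  by (simp add: numeral_2_eq_2)

lemma QE1: assumes A: "A \<in> carrier_mat n n"
  shows "bf (enlarge1 A xi) (n+2) x x = bf A n x x + x n * (\<Sum>i<n. of_int (xi i) * x i) + x n * x (Suc n)"
proof -
  let ?E = "enlarge1 A xi"
  have dA: "dim_row A = n" using A by simp
  have E: "?E $$ (i,j) = (if i < n \<and> j < n then A $$ (i,j)
      else if i < n \<and> j = n then xi i
      else if i = n+1 \<and> j = n then 1 else 0)" if "i < n+2" "j < n+2" for i j
    using that unfolding enlarge1_def Let_def dA by simp
  show ?thesis unfolding bf_def sum2
    by (simp add: E sum.distrib sum_distrib_left sum_distrib_right algebra_simps)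
qed

lemma QE2: assumes A: "A \<in> carrier_mat n n"
  shows "bf (enlarge2 A xi) (n+2) x x = bf A n x x + x n * (\<Sum>i<n. of_int (xi i) * x i) + x n * x (Suc n)"
proof -
  let ?E = "enlarge2 A xi"
  have dA: "dim_row A = n" using A by simp
  have E: "?E $$ (i,j) = (if i < n \<and> j < n then A $$ (i,j)
      else if i = n \<and> j < n then xi j
      else if i = n \<and> j = n+1 then 1 else 0)" if "i < n+2" "j < n+2" for i j
    using that unfolding enlarge2_def Let_def dA by simp
  show ?thesis unfolding bf_def sum2
    by (simp add: E sum.distrib sum_distrib_left sum_distrib_right algebra_simps)
qed

lemma posdim_down:
  fixes w :: "nat \<Rightarrow> real"
  assumes QE: "\<And>x. bf E (n+2) x x = bf A n x x + x n * (\<Sum>i<n. w i * x i) + x n * x (Suc n)"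
    and pd: "posdim E (n+2) (Suc k)"
  shows "posdim A n k"
proof -
  from pd obtain v J where vJ: "finite J" "card J = Suc k"
    "\<And>c. (\<exists>j\<in>J. c j \<noteq> 0) \<Longrightarrow> bf E (n+2) (lc v J c) (lc v J c) > 0"
    unfolding posdim_def by blast
  define r where "r = (\<lambda>j. v j n)"
  have Jne: "J \<noteq> {}" using vJ by auto
  obtain j0 where j0: "j0 \<in> J" "r j0 = 0 \<Longrightarrow> (\<forall>j\<in>J. r j = 0)"
  proof (cases "\<exists>j\<in>J. r j \<noteq> 0")
    case True then obtain j where "j \<in> J" "r j \<noteq> 0" by auto
    then show ?thesis using that by auto
  next
    case False then obtain j where "j \<in> J" using Jne by auto
    then show ?thesis using that False by auto
  qed
  define J' where "J' = J - {j0}"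
  define v' where "v' = (\<lambda>j i. v j i - r j / r j0 * v j0 i)"
  have fJ': "finite J'" and cJ': "card J' = k" unfolding J'_def using vJ j0 by auto
  have sJ: "(\<Sum>j\<in>J. f j) = f j0 + (\<Sum>j\<in>J'. f j)" for f :: "nat \<Rightarrow> real"
    unfolding J'_def using j0 vJ by (simp add: sum.remove)
  show ?thesis unfolding posdim_def
  proof (intro exI[of _ v'] exI[of _ J'] conjI allI impI)
    fix c :: "nat \<Rightarrow> real" assume c: "\<exists>j\<in>J'. c j \<noteq> 0"
    define ct where "ct = c(j0 := - (\<Sum>j\<in>J'. c j * r j) / r j0)"
    have ctJ: "(\<Sum>j\<in>J'. ct j * f j) = (\<Sum>j\<in>J'. c j * f j)" for f
      unfolding ct_def J'_def by (intro sum.cong) auto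
    have ct0: "ct j0 = - (\<Sum>j\<in>J'. c j * r j) / r j0" unfolding ct_def by simp
    have ctnz: "\<exists>j\<in>J. ct j \<noteq> 0" using c unfolding ct_def J'_def by auto
    define X where "X = lc v J ct"
    have Xn: "X n = 0"
    proof (cases "r j0 = 0")
      case True
      then have "\<forall>j\<in>J'. r j = 0" using j0 unfolding J'_def by auto
      then show ?thesis unfolding X_def lc_def sJ ctJ using True unfolding r_def by simp
    next
      case False
      then show ?thesis unfolding X_def lc_def sJ ctJ ct0 unfolding r_def by simp
    qed
    have Xi: "X i = lc v' J' c i" for i
    proof -
      have "X i = ct j0 * v j0 i + (\<Sum>j\<in>J'. c j * v j i)"
        unfolding X_def lc_def sJ ctJ ..
      also have "\<dots> = (\<Sum>j\<in>J'. c j * v j i) - (\<Sum>j\<in>J'. c j * r j) / r j0 * v j0 i"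
        unfolding ct0 by simp
      also have "\<dots> = lc v' J' c i"
        unfolding lc_def v'_def by (simp add: algebra_simps sum_subtractf sum_distrib_left sum_distrib_right sum_divide_distrib)
      finally show ?thesis .
    qed
    have "bf E (n+2) X X > 0" unfolding X_def using vJ(3)[OF ctnz] .
    also have "bf E (n+2) X X = bf A n X X" using QE[of X] Xn by simp
    also have "\<dots> = bf A n (lc v' J' c) (lc v' J' c)" by (rule bf_cong) (simp_all add: Xi)
    finally show "bf A n (lc v' J' c) (lc v' J' c) > 0" .
  qed (use fJ' cJ' in auto)
qed

lemma posdim_up:
  fixes w :: "nat \<Rightarrow> real"
  assumes QE: "\<And>x. bf E (n+2) x x = bf A n x x + x n * (\<Sum>i<n. w i * x i) + x n * x (Suc n)"
    and pd: "posdim A n k"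
  shows "posdim E (n+2) (Suc k)"
proof -
  from pd obtain v J where vJ: "finite J" "card J = k"
    "\<And>c. (\<exists>j\<in>J. c j \<noteq> 0) \<Longrightarrow> bf A n (lc v J c) (lc v J c) > 0"
    unfolding posdim_def by blast
  define sb where "sb = (\<lambda>x y. bf A n x y + bf A n y x)"
  define eta where "eta = (\<lambda>j. \<Sum>i<n. w i * v j i)"
  obtain e :: nat where e: "e \<notin> J" using ex_new_if_finite[OF infinite_UNIV_nat vJ(1)] by auto
  define M where "M = (\<lambda>j l. if l = e then eta j else sb (v j) (v l))"
  have "card J < card (insert e J)" using e vJ by simp
  from kernel[OF vJ(1) _ this, of M] vJ(1) obtain c where
    c: "\<exists>l\<in>insert e J. c l \<noteq> 0" "\<forall>j\<in>J. (\<Sum>l\<in>insert e J. M j l * c l) = 0" by auto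
  have eqc: "eta j * c e + (\<Sum>l\<in>J. sb (v j) (v l) * c l) = 0" if "j \<in> J" for j
  proof -
    have "(\<Sum>l\<in>J. M j l * c l) = (\<Sum>l\<in>J. sb (v j) (v l) * c l)"
      unfolding M_def using e by (intro sum.cong) auto
    moreover have "(\<Sum>l\<in>insert e J. M j l * c l) = 0" using c(2) that by auto
    then have "M j e * c e + (\<Sum>l\<in>J. M j l * c l) = 0" using e vJ(1) by simp
    moreover have "M j e = eta j" unfolding M_def by simp
    ultimately show ?thesis by simp
  qed
  have sb_lc: "sb (lc v J a) y = (\<Sum>j\<in>J. a j * sb (v j) y)" for a y
    unfolding sb_def bf_lc_left[OF vJ(1)] bf_lc_right[OF vJ(1)] by (simp add: sum.distrib algebra_simps)
  have sb_lc2: "sb x (lc v J a) = (\<Sum>j\<in>J. a j * sb x (v j))" for a x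
    unfolding sb_def bf_lc_left[OF vJ(1)] bf_lc_right[OF vJ(1)] by (simp add: sum.distrib algebra_simps)
  have ce: "c e \<noteq> 0"
  proof
    assume ce: "c e = 0"
    then obtain l where l: "l \<in> J" "c l \<noteq> 0" using c(1) by auto
    have sbs: "sb x y = sb y x" for x y unfolding sb_def by simp
    have z: "(\<Sum>l\<in>J. c l * sb (v l) (v j)) = 0" if "j \<in> J" for j
      using eqc[OF that] ce by (simp add: mult.commute sbs)
    have "sb (lc v J c) (lc v J c) = (\<Sum>j\<in>J. c j * (\<Sum>l\<in>J. c l * sb (v l) (v j)))"
      unfolding sb_lc sb_lc2 ..
    also have "\<dots> = 0" using z by simp
    finally have "bf A n (lc v J c) (lc v J c) = 0" unfolding sb_def by simp
    with vJ(3)[of c] l show False by auto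
  qed
  define d where "d = (\<lambda>l. c l / c e)"
  define y where "y = lc v J d"
  have sby: "sb (v j) y = - eta j" if "j \<in> J" for j
  proof -
    have "sb (v j) y = (\<Sum>l\<in>J. d l * sb (v j) (v l))" unfolding y_def sb_lc2 ..
    also have "\<dots> = (\<Sum>l\<in>J. sb (v j) (v l) * c l) / c e"
      unfolding d_def by (simp add: sum_divide_distrib algebra_simps)
    also have "\<dots> = - eta j" using eqc[OF that] ce by (simp add: field_simps)
    finally show ?thesis .
  qed
  define bb where "bb = 1 - bf A n y y - (\<Sum>i<n. w i * y i)"
  define J2 where "J2 = insert e J"
  define v2 where "v2 = (\<lambda>j i. if j = e then (if i < n then y i else if i = n then 1 else bb)
                               else (if i < n then v j i else 0))"
  have sJ2: "(\<Sum>j\<in>J2. f j) = f e + (\<Sum>j\<in>J. f j)" for f :: "nat \<Rightarrow> real"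
    unfolding J2_def using e vJ(1) by simp
  have v2J: "(\<Sum>j\<in>J. a j * v2 j i) = (if i < n then lc v J a i else 0)" for a i
  proof -
    have "(\<Sum>j\<in>J. a j * v2 j i) = (\<Sum>j\<in>J. (if i < n then a j * v j i else 0))"
      using e by (intro sum.cong) (auto simp: v2_def)
    then show ?thesis by (simp add: lc_def)
  qed
  show ?thesis unfolding posdim_def
  proof (intro exI[of _ v2] exI[of _ J2] conjI allI impI)
    show "finite J2" "card J2 = Suc k" unfolding J2_def using e vJ by auto
    fix a :: "nat \<Rightarrow> real" assume a: "\<exists>j\<in>J2. a j \<noteq> 0"
    define x where "x = lc v J a"
    define s where "s = a e"
    define X where "X = lc v2 J2 a"
    have Xi: "X i = x i + s * y i" if "i < n" for i
      unfolding X_def lc_def sJ2 using v2J[of a i] that unfolding v2_def x_def s_def lc_def by simp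
    have Xn: "X n = s" unfolding X_def lc_def sJ2 using v2J[of a n] unfolding v2_def s_def by simp
    have Xn1: "X (Suc n) = s * bb" unfolding X_def lc_def sJ2 using v2J[of a "Suc n"] unfolding v2_def s_def by simp
    have sbx: "sb x y = - (\<Sum>i<n. w i * x i)"
    proof -
      have "sb x y = (\<Sum>j\<in>J. a j * sb (v j) y)" unfolding x_def sb_lc ..
      also have "\<dots> = - (\<Sum>j\<in>J. a j * eta j)" using sby by (simp add: sum_negf[symmetric])
      also have "(\<Sum>j\<in>J. a j * eta j) = (\<Sum>i<n. w i * x i)"
        unfolding eta_def x_def lc_def
        by (simp add: sum_distrib_left sum_distrib_right algebra_simps sum.swap[of _ J])
      finally show ?thesis .
    qed
    have "bf E (n+2) X X = bf A n X X + s * (\<Sum>i<n. w i * X i) + s * (s * bb)"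
      using QE[of X] Xn Xn1 by simp
    also have "bf A n X X = bf A n (\<lambda>i. x i + s * y i) (\<lambda>i. x i + s * y i)"
      by (rule bf_cong) (simp_all add: Xi)
    also have "\<dots> = bf A n x x + s * sb x y + s^2 * bf A n y y"
      unfolding bf_expand sb_def ..
    also have "(\<Sum>i<n. w i * X i) = (\<Sum>i<n. w i * x i) + s * (\<Sum>i<n. w i * y i)"
      by (simp add: Xi sum.distrib sum_distrib_left algebra_simps)
    finally have val: "bf E (n+2) X X = bf A n x x + s^2"
      unfolding sbx bb_def by (simp add: algebra_simps power2_eq_square)
    show "bf E (n+2) (lc v2 J2 a) (lc v2 J2 a) > 0"
    proof (cases "\<exists>j\<in>J. a j \<noteq> 0")
      case True
      then have "bf A n x x > 0" unfolding x_def by (rule vJ(3))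
      then show ?thesis using val unfolding X_def by (simp add: add_pos_nonneg)
    next
      case False
      then have "s \<noteq> 0" using a unfolding J2_def s_def by auto
      moreover have "x = (\<lambda>i. 0)" unfolding x_def using False lc_zero by auto
      ultimately show ?thesis using val bf_zero_left unfolding X_def by simp
    qed
  qed
qed





definition rs :: "(real \<Rightarrow> bool) \<Rightarrow> complex poly \<Rightarrow> nat" where
  "rs P p = (\<Sum>x\<in>{x. poly p x = 0 \<and> Im x = 0 \<and> P (Re x)}. order x p)"

lemma herm_rs: "herm_signature H = int (rs (\<lambda>r. r > 0) (char_poly H)) - int (rs (\<lambda>r. r < 0) (char_poly H))"
  unfolding herm_signature_def rs_def by simp

lemma rs_mult: assumes p: "p \<noteq> 0" and q: "q \<noteq> 0"
  shows "rs P (p * q) = rs P p + rs P q"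
proof -
  let ?S = "\<lambda>p. {x. poly p x = 0 \<and> Im x = 0 \<and> P (Re x)}"
  have pq: "p * q \<noteq> 0" using p q by simp
  have fin: "finite (?S (p*q))"
    by (rule finite_subset[OF _ poly_roots_finite[OF pq]]) auto
  have sub1: "?S p \<subseteq> ?S (p*q)" and sub2: "?S q \<subseteq> ?S (p*q)" by auto
  have "rs P (p * q) = (\<Sum>x\<in>?S (p*q). order x p + order x q)"
    unfolding rs_def using order_mult[OF pq] by simp
  also have "\<dots> = (\<Sum>x\<in>?S (p*q). order x p) + (\<Sum>x\<in>?S (p*q). order x q)"
    by (rule sum.distrib)
  also have "(\<Sum>x\<in>?S (p*q). order x p) = (\<Sum>x\<in>?S p. order x p)"
    by (rule sum.mono_neutral_right[OF fin sub1]) (intro ballI order_0I; auto)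
  also have "(\<Sum>x\<in>?S (p*q). order x q) = (\<Sum>x\<in>?S q. order x q)"
    by (rule sum.mono_neutral_right[OF fin sub2]) (intro ballI order_0I; auto)
  finally show ?thesis unfolding rs_def .
qed

lemma rs_linear: "rs P [:- complex_of_real r, 1:] = (if P r then 1 else 0)"
proof -
  have S: "{x. poly [:- complex_of_real r, 1:] x = 0 \<and> Im x = 0 \<and> P (Re x)} = (if P r then {complex_of_real r} else {})"
    by auto
  have "order (complex_of_real r) [:- complex_of_real r, 1:] = 1"
    using order_power_n_n[of "complex_of_real r" 1] by simp
  then show ?thesis unfolding rs_def S by simp
qed

lemma char_poly_nz: "A \<in> carrier_mat n n \<Longrightarrow> char_poly A \<noteq> 0"
  using degree_monic_char_poly[of A n] by auto

lemma char_poly_block: fixes X :: "'a :: idom mat" assumes X: "X \<in> carrier_mat n1 n1" and Y: "Y \<in> carrier_mat n2 n2"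
  shows "char_poly (four_block_mat X (0\<^sub>m n1 n2) (0\<^sub>m n2 n1) Y) = char_poly X * char_poly Y"
proof -
  have "char_poly_matrix (four_block_mat X (0\<^sub>m n1 n2) (0\<^sub>m n2 n1) Y)
     = four_block_mat (char_poly_matrix X) (0\<^sub>m n1 n2) (0\<^sub>m n2 n1) (char_poly_matrix Y)"
    by (rule eq_matI) (use X Y in \<open>auto simp: char_poly_matrix_def\<close>)
  then show ?thesis unfolding char_poly_def
    using det_four_block_mat_lower_left_zero[of "char_poly_matrix X" n1 "0\<^sub>m n1 n2" n2 "0\<^sub>m n2 n1" "char_poly_matrix Y"] X Y
    by simp
qed

lemma herm_block: fixes X :: "complex mat" assumes X: "X \<in> carrier_mat n1 n1" and Y: "Y \<in> carrier_mat n2 n2"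
  shows "herm_signature (four_block_mat X (0\<^sub>m n1 n2) (0\<^sub>m n2 n1) Y) = herm_signature X + herm_signature Y"
  unfolding herm_rs char_poly_block[OF X Y]
  using rs_mult[OF char_poly_nz[OF X] char_poly_nz[OF Y]] by simp

definition LT :: "int mat \<Rightarrow> complex \<Rightarrow> complex mat" where
  "LT A z = (1 - z) \<cdot>\<^sub>m map_mat of_int A + (1 - cnj z) \<cdot>\<^sub>m map_mat of_int (transpose_mat A)"

lemma lt_LT: "lt_signature A z = herm_signature (LT A z)"
  unfolding lt_signature_def LT_def ..

lemma LT_carrier: "A \<in> carrier_mat n n \<Longrightarrow> LT A z \<in> carrier_mat n n"
  unfolding LT_def by auto

lemma LT_block: assumes X: "X \<in> carrier_mat n1 n1" and Y: "Y \<in> carrier_mat n2 n2"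
  shows "LT (block_sum X Y) z = four_block_mat (LT X z) (0\<^sub>m n1 n2) (0\<^sub>m n2 n1) (LT Y z)"
  by (rule eq_matI) (use X Y in \<open>auto simp: LT_def block_sum_def\<close>)

lemma lt_block: assumes X: "X \<in> carrier_mat n1 n1" and Y: "Y \<in> carrier_mat n2 n2"
  shows "lt_signature (block_sum X Y) z = lt_signature X z + lt_signature Y z"
  unfolding lt_LT LT_block[OF X Y] by (rule herm_block[OF LT_carrier[OF X] LT_carrier[OF Y]])

lemma lt_empty: "lt_signature (0\<^sub>m 0 0) z = 0"
proof -
  have "char_poly (LT (0\<^sub>m 0 0) z) = 1"
    unfolding char_poly_def by (simp add: LT_def char_poly_matrix_def)
  then show ?thesis unfolding lt_LT herm_signature_def by simp
qed



lemma det1: "det (A::'a::comm_ring_1 mat) = A $$ (0,0)" if "A \<in> carrier_mat 1 1"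
proof -
  have "{p. p permutes {0..<1::nat}} = {id}" by auto
  then show ?thesis using that by (simp add: det_def')
qed

lemma det2: "det (mat 2 2 f) = f(0,0)*f(1,1) - f(0,1)*(f(1,0)::'a::comm_ring_1)"
  apply (subst laplace_expansion_column[of _ 2 0])
    apply simp apply simp
  apply (simp add: cofactor_def det1 numeral_2_eq_2 lessThan_Suc mat_delete_def)
  done

lemma cp2: "char_poly (mat 2 2 f) = [: f(0,0)*f(1,1) - f(0,1)*f(1,0), -(f(0,0)+f(1,1)), 1 :]"
proof -
  have "char_poly_matrix (mat 2 2 f) = mat 2 2 (\<lambda>(i,j). (if i = j then [:0,1:] else 0) + [:- f(i,j):])"
    by (rule eq_matI) (auto simp: char_poly_matrix_def)
  then show ?thesis unfolding char_poly_def
    by (simp only: det2) (simp add: algebra_simps)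
qed



definition blk :: "int \<Rightarrow> int \<Rightarrow> int mat" where
  "blk a c = mat 2 2 (\<lambda>(i,j). if i = 0 \<and> j = 0 then a else if i = 0 \<and> j = 1 then 1
                              else if i = 1 \<and> j = 1 then c else 0)"

lemma blk_carrier: "blk a c \<in> carrier_mat 2 2" unfolding blk_def by simp

lemma two_cases: "(i::nat) < 2 \<Longrightarrow> i = 0 \<or> i = 1" by auto

lemma LT_blk: "LT (blk a c) z = mat 2 2 (\<lambda>(i,j). if i = 0 \<and> j = 0 then (2 - z - cnj z) * of_int a
     else if i = 0 \<and> j = 1 then 1 - z else if i = 1 \<and> j = 0 then 1 - cnj z else (2 - z - cnj z) * of_int c)"
proof (rule eq_matI)
  fix i j assume ij: "i < dim_row (mat 2 2 (\<lambda>(i,j). if i = 0 \<and> j = 0 then (2 - z - cnj z) * of_int a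
     else if i = 0 \<and> j = 1 then 1 - z else if i = 1 \<and> j = 0 then 1 - cnj z else (2 - z - cnj z) * of_int c))"
     "j < dim_col (mat 2 2 (\<lambda>(i,j). if i = 0 \<and> j = 0 then (2 - z - cnj z) * of_int a
     else if i = 0 \<and> j = 1 then 1 - z else if i = 1 \<and> j = 0 then 1 - cnj z else (2 - z - cnj z) * of_int c))"
  then have "i = 0 \<or> i = 1" "j = 0 \<or> j = 1" by auto
  then show "LT (blk a c) z $$ (i, j) = mat 2 2 (\<lambda>(i,j). if i = 0 \<and> j = 0 then (2 - z - cnj z) * of_int a
     else if i = 0 \<and> j = 1 then 1 - z else if i = 1 \<and> j = 0 then 1 - cnj z else (2 - z - cnj z) * of_int c) $$ (i, j)"
    by (auto simp: LT_def blk_def algebra_simps)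
qed (auto simp: LT_def blk_def)

lemma cis_sum: "2 - cis t - cnj (cis t) = complex_of_real (2 - 2 * cos t)"
  by (simp add: complex_eq_iff)

lemma cis_prod: "(1 - cis t) * (1 - cnj (cis t)) = complex_of_real (2 - 2 * cos t)"
proof -
  have "sin t * sin t = 1 - cos t * cos t" using sin_squared_eq[of t] by (simp add: power2_eq_square)
  then show ?thesis by (simp add: complex_eq_iff algebra_simps)
qed

lemma lin_prod: "[:-complex_of_real l1, 1:] * [:-complex_of_real l2, 1:] = [: complex_of_real (l1*l2), - complex_of_real (l1+l2), 1:]"
  by (simp add: mult_pCons_left mult_pCons_right algebra_simps)

definition sg :: "real \<Rightarrow> int" where "sg r = (if r > 0 then 1 else if r < 0 then -1 else 0)"

lemma herm_roots: assumes "char_poly H = [:-complex_of_real l1, 1:] * [:-complex_of_real l2, 1:]"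
  shows "herm_signature H = sg l1 + sg l2"
proof -
  have nz: "[:-complex_of_real l, 1:] \<noteq> 0" for l by simp
  show ?thesis unfolding herm_rs assms rs_mult[OF nz nz] rs_linear sg_def by auto
qed

lemma blk_roots: fixes a c :: int and t :: real
  defines "e \<equiv> 2 - 2 * cos t"
  defines "D \<equiv> (real_of_int (a - c))^2 * e^2 + 4 * e"
  defines "l1 \<equiv> (real_of_int (a + c) * e + sqrt D) / 2"
  defines "l2 \<equiv> (real_of_int (a + c) * e - sqrt D) / 2"
  shows "lt_signature (blk a c) (cis t) = sg l1 + sg l2"
    and "l1 * l2 = e * (real_of_int (a * c) * e - 1)" and "l1 + l2 = real_of_int (a + c) * e"
    and "e \<ge> 0"
proof -
  show e0: "e \<ge> 0" unfolding e_def using cos_le_one[of t] by linarith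
  have D0: "D \<ge> 0" unfolding D_def using e0 by simp
  show s: "l1 + l2 = real_of_int (a + c) * e" unfolding l1_def l2_def by (simp add: field_simps)
  have "l1 * l2 = ((real_of_int (a + c) * e)^2 - (sqrt D)^2) / 4"
    unfolding l1_def l2_def by (simp add: field_simps power2_eq_square)
  also have "(sqrt D)^2 = D" using D0 by simp
  finally show p: "l1 * l2 = e * (real_of_int (a * c) * e - 1)"
    unfolding D_def by (simp add: field_simps power2_eq_square)
  have L: "LT (blk a c) (cis t) = mat 2 2 (\<lambda>(i,j). if i = 0 \<and> j = 0 then complex_of_real e * of_int a
     else if i = 0 \<and> j = 1 then 1 - cis t else if i = 1 \<and> j = 0 then 1 - cnj (cis t) else complex_of_real e * of_int c)"
    unfolding LT_blk cis_sum e_def ..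
  have "char_poly (LT (blk a c) (cis t)) = [: complex_of_real e * of_int a * (complex_of_real e * of_int c) - (1 - cis t) * (1 - cnj (cis t)),
      - (complex_of_real e * of_int a + complex_of_real e * of_int c), 1:]"
    unfolding L cp2 by simp
  also have "\<dots> = [: complex_of_real (l1*l2), - complex_of_real (l1+l2), 1:]"
    unfolding p s cis_prod e_def[symmetric] by (simp add: algebra_simps)
  finally have "char_poly (LT (blk a c) (cis t)) = [: complex_of_real (l1*l2), - complex_of_real (l1+l2), 1:]" .
  then show "lt_signature (blk a c) (cis t) = sg l1 + sg l2"
    unfolding lt_LT lin_prod[symmetric] by (rule herm_roots)
qed

lemma sg_pair: fixes l1 l2 e p q :: real
  assumes pr: "l1 * l2 = e * (p * e - 1)" and su: "l1 + l2 = q * e" and e: "e \<ge> 0" and p: "p > 0"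
    and ne: "p * e \<noteq> 1" and q: "q \<noteq> 0"
  shows "sg l1 + sg l2 = (if p * e > 1 then (if q > 0 then 2 else -2) else 0)"
proof (cases "p * e > 1")
  case True
  then have e0: "e > 0" using p e by (cases "e = 0") auto
  have "l1 * l2 > 0" unfolding pr using True e0 by simp
  then have "(l1 > 0 \<and> l2 > 0) \<or> (l1 < 0 \<and> l2 < 0)" by (auto simp: zero_less_mult_iff)
  moreover have qq: "q > 0 \<longleftrightarrow> l1 + l2 > 0" unfolding su using e0 by (simp add: zero_less_mult_iff)
  ultimately show ?thesis using True unfolding sg_def by auto
next
  case False
  then have lt: "p * e < 1" using ne by auto
  show ?thesis
  proof (cases "e = 0")
    case True
    then have "l1 * l2 = 0" "l1 + l2 = 0" using pr su by auto
    then have "l1 = 0" "l2 = 0" by (auto simp: add_eq_0_iff)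
    then show ?thesis using False unfolding sg_def by simp
  next
    case False
    then have "l1 * l2 < 0" unfolding pr using lt e by (simp add: mult_pos_neg)
    then have "(l1 > 0 \<and> l2 < 0) \<or> (l1 < 0 \<and> l2 > 0)" by (auto simp: mult_less_0_iff)
    then show ?thesis using lt unfolding sg_def by auto
  qed
qed

lemma blk_sig: fixes a c :: int and t :: real
  assumes ac: "a * c > 0" and ne: "real_of_int (a*c) * (2 - 2*cos t) \<noteq> 1"
  shows "lt_signature (blk a c) (cis t) = (if real_of_int (a*c) * (2 - 2*cos t) > 1 then 2 * sgn a else 0)"
proof -
  note R1 = blk_roots(1)[of a c t] and R2 = blk_roots(2)[of a c t] and R3 = blk_roots(3)[of a c t]
    and R4 = blk_roots(4)[of t]
  have q: "real_of_int (a + c) \<noteq> 0" and qs: "real_of_int (a + c) > 0 \<longleftrightarrow> a > 0"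
    using ac by (auto simp: zero_less_mult_iff)
  have p: "real_of_int (a * c) > 0" using ac by (simp only: of_int_0_less_iff)
  have "lt_signature (blk a c) (cis t) = (if real_of_int (a*c) * (2 - 2*cos t) > 1 then (if real_of_int (a + c) > 0 then 2 else -2) else 0)"
    unfolding R1 by (rule sg_pair[OF R2 R3 R4 p ne q])
  then show ?thesis using qs ac by (auto simp: sgn_if zero_less_mult_iff)
qed




lemma good_enl1: assumes A: "A \<in> carrier_mat n n"
  shows "good (enlarge1 A xi) \<longleftrightarrow> good A"
proof -
  have d: "dim_row (enlarge1 A xi) = n + 2" unfolding enlarge1_def Let_def using A by simp
  have dA: "dim_row A = n" using A by simp
  note Q = QE1[OF A, of xi]
  show ?thesis
  proof
    assume "good (enlarge1 A xi)"
    then obtain k where k: "n + 2 < 2 * k" "posdim (enlarge1 A xi) (n+2) k" unfolding good_def d by auto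
    then obtain k' where k': "k = Suc k'" by (cases k) auto
    have "posdim A n k'" by (rule posdim_down[OF Q]) (use k k' in auto)
    then show "good A" unfolding good_def dA using k k' by (intro exI[of _ k']) auto
  next
    assume "good A"
    then obtain k where k: "n < 2 * k" "posdim A n k" unfolding good_def dA by auto
    have "posdim (enlarge1 A xi) (n+2) (Suc k)" by (rule posdim_up[OF Q k(2)])
    then show "good (enlarge1 A xi)" unfolding good_def d using k by (intro exI[of _ "Suc k"]) auto
  qed
qed

lemma good_enl2: assumes A: "A \<in> carrier_mat n n"
  shows "good (enlarge2 A xi) \<longleftrightarrow> good A"
proof -
  have d: "dim_row (enlarge2 A xi) = n + 2" unfolding enlarge2_def Let_def using A by simp
  have dA: "dim_row A = n" using A by simp
  note Q = QE2[OF A, of xi]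
  show ?thesis
  proof
    assume "good (enlarge2 A xi)"
    then obtain k where k: "n + 2 < 2 * k" "posdim (enlarge2 A xi) (n+2) k" unfolding good_def d by auto
    then obtain k' where k': "k = Suc k'" by (cases k) auto
    have "posdim A n k'" by (rule posdim_down[OF Q]) (use k k' in auto)
    then show "good A" unfolding good_def dA using k k' by (intro exI[of _ k']) auto
  next
    assume "good A"
    then obtain k where k: "n < 2 * k" "posdim A n k" unfolding good_def dA by auto
    have "posdim (enlarge2 A xi) (n+2) (Suc k)" by (rule posdim_up[OF Q k(2)])
    then show "good (enlarge2 A xi)" unfolding good_def d using k by (intro exI[of _ "Suc k"]) auto
  qed
qed

lemma good_congr1: assumes "int_congruent A B" "good B" shows "good A"
proof -
  from assms(1) obtain n P where A: "A \<in> carrier_mat n n" and P: "P \<in> carrier_mat n n"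
    and B: "B = P * A * transpose_mat P"
    unfolding int_congruent_def by blast
  have dB: "dim_row B = n" "dim_row A = n" using A P B by auto
  from assms(2) obtain k where k: "n < 2 * k" "posdim B n k" unfolding good_def dB by auto
  have "posdim A n k" using posdim_congr[OF A P] k B by simp
  then show ?thesis unfolding good_def dB using k by auto
qed

lemma S_equiv_good: "S_equiv A B \<Longrightarrow> good A \<longleftrightarrow> good B"
proof (induction rule: S_equiv.induct)
  case (congr A B)
  then show ?case using good_congr1 congruent_sym by blast
next
  case (enl1 A n xi)
  then show ?case using good_enl1 by blast
next
  case (enl2 A n xi)
  then show ?case using good_enl2 by blast
qed auto



lemma cos_cmp: fixes t th :: real
  assumes t: "0 \<le> t" "t \<le> 2*pi" and th: "0 \<le> th" "th \<le> pi" and nt: "t \<noteq> th" "t \<noteq> 2*pi - th"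
  shows "cos t \<noteq> cos th" and "cos t < cos th \<longleftrightarrow> t \<in> {th..2*pi - th}"
proof -
  have "cos t \<noteq> cos th \<and> (cos t < cos th \<longleftrightarrow> t \<in> {th..2*pi - th})"
  proof (cases "t \<le> pi")
    case True
    have "cos t \<noteq> cos th" using cos_inj_pi[OF t(1) True th] nt by auto
    moreover have "cos t < cos th \<longleftrightarrow> th < t" using cos_mono_less_eq[OF t(1) True th] .
    ultimately show ?thesis using True th nt by auto
  next
    case False
    define t' where "t' = 2*pi - t"
    have t': "0 \<le> t'" "t' \<le> pi" using False t unfolding t'_def by auto
    have ct: "cos t = cos t'" unfolding t'_def by simp
    have "cos t \<noteq> cos th" using cos_inj_pi[OF t' th] nt unfolding ct t'_def by auto
    moreover have "cos t < cos th \<longleftrightarrow> th < t'" unfolding ct using cos_mono_less_eq[OF t' th] .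
    ultimately show ?thesis using False th nt unfolding t'_def by auto
  qed
  then show "cos t \<noteq> cos th" and "cos t < cos th \<longleftrightarrow> t \<in> {th..2*pi - th}" by auto
qed

lemma step_int: fixes g :: "real \<Rightarrow> real"
  assumes th: "0 \<le> th" "th \<le> pi"
    and g: "\<And>t. t \<in> {0..2*pi} \<Longrightarrow> cos t \<noteq> cos th \<Longrightarrow> g t = (if cos t < cos th then C else 0)"
  shows "(g has_integral C * (2*pi - 2*th)) {0..2*pi}"
proof -
  have c: "((\<lambda>x. C) has_integral C * (2*pi - 2*th)) (cbox th (2*pi - th))"
    using has_integral_const_real[of C th "2*pi - th"] th by (simp add: algebra_simps)
  have "((\<lambda>x. if x \<in> cbox th (2*pi - th) then C else 0) has_integral C * (2*pi - 2*th)) (cbox 0 (2*pi))"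
    by (rule has_integral_restrict_closed_subinterval[OF c]) (use th in auto)
  then have i: "((\<lambda>x. if x \<in> {th..2*pi - th} then C else 0) has_integral C * (2*pi - 2*th)) {0..2*pi}"
    by simp
  show ?thesis
  proof (rule has_integral_spike_finite[OF _ _ i])
    show "finite {th, 2*pi - th}" by simp
    fix t assume t: "t \<in> {0..2*pi} - {th, 2*pi - th}"
    then have t1: "0 \<le> t" "t \<le> 2*pi" "t \<noteq> th" "t \<noteq> 2*pi - th" by auto
    show "g t = (if t \<in> {th..2*pi - th} then C else 0)"
      using g[of t] cos_cmp[OF t1(1,2) th t1(3,4)] t1 by auto
  qed
qed

lemma theta16: "arccos (31/32) = pi - 4 * arccos (3/4)"
proof -
  define th where "th = arccos (3/4)"
  have c: "cos th = 3/4" unfolding th_def by simp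
  have th0: "0 \<le> th" unfolding th_def by (rule arccos_lbound) auto
  have s2: "sqrt 2 \<le> 3/2"
  proof -
    have a: "sqrt (9/4) = 3/2" by (rule real_sqrt_unique) (auto simp: power2_eq_square)
    have b: "sqrt 2 \<le> sqrt (9/4)" by (simp only: real_sqrt_le_iff)
    show ?thesis using a b by linarith
  qed
  have "cos (pi/4) \<le> cos th" unfolding cos_45 c using s2 by simp
  then have th1: "th \<le> pi/4" using cos_mono_le_eq[of "pi/4" th] th0 arccos_ubound[of "3/4"]
    unfolding th_def by auto
  have c2: "cos (2*th) = 1/8" unfolding cos_double_cos c by (simp add: power2_eq_square)
  have "cos (4*th) = cos (2*(2*th))" by simp
  also have "\<dots> = 2 * (cos (2*th))^2 - 1" by (rule cos_double_cos)
  also have "\<dots> = -31/32" unfolding c2 by (simp add: power2_eq_square)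
  finally have "cos (pi - 4*th) = 31/32" by simp
  then have "arccos (31/32) = arccos (cos (pi - 4*th))" by (simp only:)
  also have "\<dots> = pi - 4*th" by (rule arccos_cos) (use th0 th1 in auto)
  finally show ?thesis unfolding th_def .
qed

fun bsl :: "int mat list \<Rightarrow> int mat" where
  "bsl [] = 0\<^sub>m 0 0"
| "bsl (X # Xs) = block_sum X (bsl Xs)"

lemma block_sum_carrier: "X \<in> carrier_mat n1 n1 \<Longrightarrow> Y \<in> carrier_mat n2 n2 \<Longrightarrow> block_sum X Y \<in> carrier_mat (n1+n2) (n1+n2)"
  unfolding block_sum_def by auto

lemma bsl_carrier: "\<forall>X\<in>set Xs. X \<in> carrier_mat 2 2 \<Longrightarrow> bsl Xs \<in> carrier_mat (2 * length Xs) (2 * length Xs)"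
  by (induction Xs) (auto intro!: block_sum_carrier[of _ 2 _ "2 * length _", simplified])

lemma lt_bsl: "\<forall>X\<in>set Xs. X \<in> carrier_mat 2 2 \<Longrightarrow> lt_signature (bsl Xs) z = sum_list (map (\<lambda>X. lt_signature X z) Xs)"
proof (induction Xs)
  case Nil then show ?case by (simp add: lt_empty)
next
  case (Cons X Xs)
  then show ?case using lt_block[of X 2 "bsl Xs" "2 * length Xs" z] bsl_carrier[of Xs] by simp
qed

lemma det_block_sum: fixes X :: "int mat"
  assumes X: "X \<in> carrier_mat n1 n1" and Y: "Y \<in> carrier_mat n2 n2"
  shows "det (block_sum X Y) = det X * det Y"
proof -
  have d: "dim_row X = n1" "dim_col X = n1" "dim_row Y = n2" "dim_col Y = n2" using X Y by auto
  show ?thesis unfolding block_sum_def d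
    by (rule det_four_block_mat_lower_left_zero[of X n1 "0\<^sub>m n1 n2" n2 "0\<^sub>m n2 n1" Y]) (use X Y in auto)
qed

lemma block_sum_plusT: assumes X: "X \<in> carrier_mat n1 n1" and Y: "Y \<in> carrier_mat n2 n2"
  shows "block_sum X Y + transpose_mat (block_sum X Y) = block_sum (X + transpose_mat X) (Y + transpose_mat Y)"
  by (rule eq_matI) (use X Y in \<open>auto simp: block_sum_def\<close>)

lemma block_sum_minusT: assumes X: "X \<in> carrier_mat n1 n1" and Y: "Y \<in> carrier_mat n2 n2"
  shows "block_sum X Y - transpose_mat (block_sum X Y) = block_sum (X - transpose_mat X) (Y - transpose_mat Y)"
  by (rule eq_matI) (use X Y in \<open>auto simp: block_sum_def\<close>)

lemma det_bsl_plus: "\<forall>X\<in>set Xs. X \<in> carrier_mat 2 2 \<Longrightarrow>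
   det (bsl Xs + transpose_mat (bsl Xs)) = prod_list (map (\<lambda>X. det (X + transpose_mat X)) Xs)"
proof (induction Xs)
  case Nil then show ?case by (auto intro!: det_dim_zero)
next
  case (Cons X Xs)
  have X: "X \<in> carrier_mat 2 2" and B: "bsl Xs \<in> carrier_mat (2 * length Xs) (2 * length Xs)"
    using Cons.prems bsl_carrier[of Xs] by auto
  show ?case using Cons block_sum_plusT[OF X B]
      det_block_sum[of "X + transpose_mat X" 2 "bsl Xs + transpose_mat (bsl Xs)" "2 * length Xs"] X B
    by simp
qed

lemma det_bsl_minus: "\<forall>X\<in>set Xs. X \<in> carrier_mat 2 2 \<Longrightarrow>
   det (bsl Xs - transpose_mat (bsl Xs)) = prod_list (map (\<lambda>X. det (X - transpose_mat X)) Xs)"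
proof (induction Xs)
  case Nil then show ?case by (auto intro!: det_dim_zero)
next
  case (Cons X Xs)
  have X: "X \<in> carrier_mat 2 2" and B: "bsl Xs \<in> carrier_mat (2 * length Xs) (2 * length Xs)"
    using Cons.prems bsl_carrier[of Xs] by auto
  have C1: "X - transpose_mat X \<in> carrier_mat 2 2" using X by (intro minus_carrier_mat) auto
  have C2: "bsl Xs - transpose_mat (bsl Xs) \<in> carrier_mat (2 * length Xs) (2 * length Xs)"
    using B by (intro minus_carrier_mat) auto
  show ?case using Cons block_sum_minusT[OF X B] C1 C2
      det_block_sum[of "X - transpose_mat X" 2 "bsl Xs - transpose_mat (bsl Xs)" "2 * length Xs"] X B
    by simp
qed

lemma blk_plus: "blk a c + transpose_mat (blk a c) = mat 2 2 (\<lambda>(i,j). if i = 0 \<and> j = 0 then 2*a else if i = 1 \<and> j = 1 then 2*c else 1)"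
proof (rule eq_matI)
  fix i j assume "i < dim_row (mat 2 2 (\<lambda>(i,j). if i = 0 \<and> j = 0 then 2*a else if i = 1 \<and> j = 1 then 2*c else (1::int)))"
    "j < dim_col (mat 2 2 (\<lambda>(i,j). if i = 0 \<and> j = 0 then 2*a else if i = 1 \<and> j = 1 then 2*c else (1::int)))"
  then have "i = 0 \<or> i = 1" "j = 0 \<or> j = 1" by auto
  then show "(blk a c + transpose_mat (blk a c)) $$ (i, j) = mat 2 2 (\<lambda>(i,j). if i = 0 \<and> j = 0 then 2*a else if i = 1 \<and> j = 1 then 2*c else 1) $$ (i, j)"
    by (auto simp: blk_def)
qed (auto simp: blk_def)

lemma blk_minus: "blk a c - transpose_mat (blk a c) = mat 2 2 (\<lambda>(i,j). if i = 0 \<and> j = 1 then 1 else if i = 1 \<and> j = 0 then -1 else 0)"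
proof (rule eq_matI)
  fix i j assume "i < dim_row (mat 2 2 (\<lambda>(i,j). if i = 0 \<and> j = 1 then 1 else if i = 1 \<and> j = 0 then -1 else (0::int)))"
    "j < dim_col (mat 2 2 (\<lambda>(i,j). if i = 0 \<and> j = 1 then 1 else if i = 1 \<and> j = 0 then -1 else (0::int)))"
  then have "i = 0 \<or> i = 1" "j = 0 \<or> j = 1" by auto
  then show "(blk a c - transpose_mat (blk a c)) $$ (i, j) = mat 2 2 (\<lambda>(i,j). if i = 0 \<and> j = 1 then 1 else if i = 1 \<and> j = 0 then -1 else 0) $$ (i, j)"
    by (auto simp: blk_def)
qed (auto simp: blk_def)

lemma det_blk_plus: "det (blk a c + transpose_mat (blk a c)) = 4 * a * c - 1"
  unfolding blk_plus det2 by simp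

lemma det_blk_minus: "det (blk a c - transpose_mat (blk a c)) = 1"
  unfolding blk_minus det2 by simp

definition Ls :: "int mat list" where
  "Ls = replicate 6 (blk 1 1) @ replicate 4 (blk (-1) (-2)) @ [blk (-1) (-16)]"

definition Kmat :: "int mat" where "Kmat = bsl Ls"

lemma Ls_carrier: "\<forall>X\<in>set Ls. X \<in> carrier_mat 2 2"
  unfolding Ls_def using blk_carrier by auto

lemma K_carrier: "Kmat \<in> carrier_mat 22 22"
  using bsl_carrier[OF Ls_carrier] unfolding Kmat_def Ls_def by simp

lemma K_seifert: "seifert_matrix Kmat"
  unfolding seifert_matrix_def
  using K_carrier det_bsl_minus[OF Ls_carrier] unfolding Kmat_def Ls_def
  by (auto simp: det_blk_minus)

lemma K_arf: "arf_zero Kmat"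
  unfolding arf_zero_def Kmat_def det_bsl_plus[OF Ls_carrier]
  unfolding Ls_def by (simp add: det_blk_plus)

lemma K_lt: "lt_signature Kmat z = 6 * lt_signature (blk 1 1) z + 4 * lt_signature (blk (-1) (-2)) z + lt_signature (blk (-1) (-16)) z"
  unfolding Kmat_def lt_bsl[OF Ls_carrier] unfolding Ls_def by (simp add: sum_list_replicate)

lemma g1: "((\<lambda>t. real_of_int (lt_signature (blk 1 1) (cis t))) has_integral 2 * (2*pi - 2*(pi/3))) {0..2*pi}"
proof (rule step_int)
  fix t assume "t \<in> {0..2*pi}" "cos t \<noteq> cos (pi/3)"
  then have ne: "cos t \<noteq> 1/2" by (simp add: cos_60)
  have "lt_signature (blk 1 1) (cis t) = (if real_of_int (1*1) * (2 - 2*cos t) > 1 then 2 * sgn 1 else 0)"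
    by (rule blk_sig) (use ne in auto)
  then show "real_of_int (lt_signature (blk 1 1) (cis t)) = (if cos t < cos (pi/3) then 2 else 0)"
    by (simp add: cos_60)
qed auto

lemma g2: "((\<lambda>t. real_of_int (lt_signature (blk (-1) (-2)) (cis t))) has_integral (-2) * (2*pi - 2*arccos (3/4))) {0..2*pi}"
proof (rule step_int)
  fix t assume "t \<in> {0..2*pi}" "cos t \<noteq> cos (arccos (3/4))"
  then have ne: "cos t \<noteq> 3/4" by simp
  have "lt_signature (blk (-1) (-2)) (cis t) = (if real_of_int ((-1)*(-2)) * (2 - 2*cos t) > 1 then 2 * sgn (-1) else 0)"
    by (rule blk_sig) (use ne in auto)
  then show "real_of_int (lt_signature (blk (-1) (-2)) (cis t)) = (if cos t < cos (arccos (3/4)) then -2 else 0)"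
    by simp
qed (auto intro: arccos_lbound arccos_ubound)

lemma g16: "((\<lambda>t. real_of_int (lt_signature (blk (-1) (-16)) (cis t))) has_integral (-2) * (2*pi - 2*arccos (31/32))) {0..2*pi}"
proof (rule step_int)
  fix t assume "t \<in> {0..2*pi}" "cos t \<noteq> cos (arccos (31/32))"
  then have ne: "cos t \<noteq> 31/32" by simp
  have "lt_signature (blk (-1) (-16)) (cis t) = (if real_of_int ((-1)*(-16)) * (2 - 2*cos t) > 1 then 2 * sgn (-1) else 0)"
    by (rule blk_sig) (use ne in auto)
  then show "real_of_int (lt_signature (blk (-1) (-16)) (cis t)) = (if cos t < cos (arccos (31/32)) then -2 else 0)"
    by simp
qed (auto intro: arccos_lbound arccos_ubound)

lemma K_eta: "abelian_eta Kmat = 0"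
proof -
  have "((\<lambda>t. 6 * real_of_int (lt_signature (blk 1 1) (cis t)) + 4 * real_of_int (lt_signature (blk (-1) (-2)) (cis t))
          + real_of_int (lt_signature (blk (-1) (-16)) (cis t))) has_integral
        (6 * (2 * (2*pi - 2*(pi/3))) + 4 * ((-2) * (2*pi - 2*arccos (3/4))) + (-2) * (2*pi - 2*arccos (31/32)))) {0..2*pi}"
    by (intro has_integral_add has_integral_mult_right g1 g2 g16)
  moreover have "6 * (2 * (2*pi - 2*(pi/3))) + 4 * ((-2) * (2*pi - 2*arccos (3/4))) + (-2) * (2*pi - 2*arccos (31/32)) = 0"
    unfolding theta16 by (simp add: algebra_simps)
  ultimately have "((\<lambda>t. real_of_int (lt_signature Kmat (cis t))) has_integral 0) {0..2*pi}"
    unfolding K_lt by simp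
  then show ?thesis unfolding abelian_eta_def by (simp add: integral_unique)
qed


lemma posdim_zero: "posdim A n 0"
  unfolding posdim_def by (intro exI[of _ "\<lambda>j i. 0"] exI[of _ "{}"]) auto

lemma posdim_pos: "posdim (blk 1 1) 2 2"
proof -
  have Q: "bf (blk 1 1) 2 x x = x 0 * x 0 + x 0 * x 1 + x 1 * x 1" for x
    unfolding bf_def blk_def by (simp add: numeral_2_eq_2 lessThan_Suc)
  define v :: "nat \<Rightarrow> nat \<Rightarrow> real" where "v = (\<lambda>j i. if i = j then 1 else 0)"
  have l0: "lc v {0,1} c 0 = c 0" and l1: "lc v {0,1} c 1 = c 1" for c
    unfolding lc_def v_def by simp_all
  show ?thesis unfolding posdim_def
  proof (intro exI[of _ v] exI[of _ "{0,1}"] conjI allI impI)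
    fix c :: "nat \<Rightarrow> real" assume "\<exists>j\<in>{0,1}. c j \<noteq> 0"
    then have nz: "c 0 \<noteq> 0 \<or> c 1 \<noteq> 0" by auto
    have "0 < (c 0)^2 + (c 1)^2" using nz by (simp add: sum_power2_gt_zero_iff)
    then have a: "0 < (c 0 * c 0 + c 1 * c 1) / 2" by (simp add: power2_eq_square)
    have e: "c 0 * c 0 + c 0 * c 1 + c 1 * c 1 = (c 0 * c 0 + c 1 * c 1) / 2 + ((c 0 + c 1) * (c 0 + c 1)) / 2"
      by (simp add: field_simps)
    have b: "((c 0 + c 1) * (c 0 + c 1)) / 2 \<ge> 0" by simp
    have "c 0 * c 0 + c 0 * c 1 + c 1 * c 1 > 0" unfolding e using a b by (rule add_pos_nonneg)
    then show "bf (blk 1 1) 2 (lc v {0,1} c) (lc v {0,1} c) > 0" unfolding Q l0 l1 .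
  qed auto
qed

lemma posdim_bsl: "list_all2 (\<lambda>X k. X \<in> carrier_mat 2 2 \<and> posdim X 2 k) Xs ks \<Longrightarrow>
   posdim (bsl Xs) (2 * length Xs) (sum_list ks)"
proof (induction Xs arbitrary: ks)
  case Nil then show ?case by (simp add: posdim_zero)
next
  case (Cons X Xs)
  then obtain k ks' where ks: "ks = k # ks'" and X: "X \<in> carrier_mat 2 2" "posdim X 2 k"
    and r: "list_all2 (\<lambda>X k. X \<in> carrier_mat 2 2 \<and> posdim X 2 k) Xs ks'"
    by (cases ks) auto
  have C: "\<forall>Y\<in>set Xs. Y \<in> carrier_mat 2 2" using r by (auto simp: list_all2_conv_all_nth in_set_conv_nth)
  have "posdim (block_sum X (bsl Xs)) (2 + 2 * length Xs) (k + sum_list ks')"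
    by (rule posdim_block[OF X(1) bsl_carrier[OF C] X(2) Cons.IH[OF r]])
  then show ?case using ks by simp
qed

lemma posdim_K: "posdim Kmat 22 12"
proof -
  have "list_all2 (\<lambda>X k. X \<in> carrier_mat 2 2 \<and> posdim X 2 k) Ls (replicate 6 2 @ replicate 5 0)"
  proof -
    have r6: "replicate 6 x = [x,x,x,x,x,x]" and r5: "replicate 5 x = [x,x,x,x,x]"
      and r4: "replicate 4 x = [x,x,x,x]" for x :: 'b
      by (simp_all add: numeral_eq_Suc)
    have P1: "blk 1 1 \<in> carrier_mat 2 2 \<and> posdim (blk 1 1) 2 2" using blk_carrier posdim_pos by auto
    have P0: "blk a c \<in> carrier_mat 2 2 \<and> posdim (blk a c) 2 0" for a c using blk_carrier posdim_zero by auto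
    show ?thesis unfolding Ls_def r6 r5 r4 using P1 P0 by simp
  qed
  from posdim_bsl[OF this] show ?thesis unfolding Kmat_def Ls_def by (simp add: sum_list_replicate)
qed

lemma mfold_K: "mfold_sum m Kmat \<in> carrier_mat (22*m) (22*m) \<and> posdim (mfold_sum m Kmat) (22*m) (12*m)"
proof (induction m)
  case 0 then show ?case by (simp add: posdim_zero)
next
  case (Suc m)
  have "posdim (block_sum Kmat (mfold_sum m Kmat)) (22 + 22*m) (12 + 12*m)"
    using posdim_block[OF K_carrier _ posdim_K] Suc by blast
  moreover have "block_sum Kmat (mfold_sum m Kmat) \<in> carrier_mat (22 + 22*m) (22 + 22*m)"
    using block_sum_carrier[OF K_carrier] Suc by blast
  ultimately show ?case by simp
qed

lemma K_not_torsion: "\<not> alg_torsion Kmat"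
proof
  assume "alg_torsion Kmat"
  then obtain m M where m: "m > 0" and S: "S_equiv (mfold_sum m Kmat) M" and M: "metabolic_form M"
    unfolding alg_torsion_def alg_slice_def by blast
  have "good (mfold_sum m Kmat)" unfolding good_def
    using mfold_K[of m] m by (intro exI[of _ "12*m"]) auto
  then have "good M" using S_equiv_good[OF S] by simp
  with metabolic_not_good[OF M] show False by simp
qed

theorem proposition6p8:
  shows "\<exists>A :: int mat. seifert_matrix A \<and> arf_zero A \<and> abelian_eta A = 0 \<and> \<not> alg_torsion A"
  using K_seifert K_arf K_eta K_not_torsion by blast

end
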